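(* Consider the airfoil system $\ddot x_1+2G^1(x,\dot x)=0$, $\ddot x_2+2G^2(x,\dot x)=0$ with $y_i=\dot x_i$, $$G^1=\frac{6V^2M^2x_2^3-6000Mx_2^3+30V^2x_2+30V^2y_1+19V^2y_2+240VMy_1-60VMy_2+1200Mx_1-300Mx_2}{2100V^2M},$$ $$G^2=-\frac{18V^2M^2x_2^3-60000Mx_2^3+90V^2x_2+90V^2y_1+85V^2y_2+300VMy_1-600VMy_2+1500Mx_1-3000Mx_2}{5250V^2M},$$ where $M=M_\infty>0$ and $V>0$ are real parameters. Define $R_1=-9450V^2M-43V^2+135VM+621900M^2$, $R_2=1800V^4M+1500V^3M^2-15660000V^2M^3+4V^4+20V^3M-123675V^2M^2+297000VM^3+769590000M^4$, $R_3=-V^2+50M$, $R_4=V^2M-5000$, $R_5=-18900V^4M^2+43V^4M-135V^3M^2+795600V^2M^3+47250000V^2M-215000V^2+675000VM-1615500000M^2$, $R_6=3600V^6M^2+3000V^5M^3-31320000V^4M^4-4V^6M-20V^5M^2-146325V^4M^3-522000V^3M^4+1579410000V^2M^5-4500000V^4M-532500000V^3M^2+155250000000V^2M^3+20000V^4+100000V^3M+56625000V^2M^2+28485000000VM^3-7829550000000M^4$, and assume the genericity condition $(M-10)R_1R_2R_3R_4R_5R_6\neq0$. Then: (a) the system has exactly one Jacobi stable fixed point if and only if one of the following holds: (i) $R_1>0,R_2>0,R_4>0,R_5>0,R_6>0$; (ii) $R_1>0,R_2>0,R_3>0,R_4<0$; (iii) $R_1>0,R_2>0,R_3>0,R_4>0,R_5<0,R_6>0$;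 (b) the system has exactly two Jacobi stable fixed points if and only if one of the following holds: (i) $R_1<0,R_3<0,R_4<0,R_5>0,R_6>0$; (ii) $R_1>0,R_2<0,R_3<0,R_4<0,R_5>0,R_6>0$.
   Context: This is the dimensionless aeroelastic airfoil model with cubic pitching nonlinearity in supersonic flow ($x_1$ plunge, $x_2$ pitch, $M_\infty$ the flight Mach number, $V$ a dimensionless velocity), after fixing the remaining airfoil constants. Fixed points are points $(x_1,x_2)\in\mathbb{R}^2$ with $G^1(x,0)=G^2(x,0)=0$. Einstein summation is used; $N^i_j=\partial G^i/\partial y_j$, $G^i_{j\ell}=\partial N^i_j/\partial y_\ell$, and the deviation curvature tensor is $P^i_j=-2\frac{\partial G^i}{\partial x_j}-2G^\ell G^i_{j\ell}+y_\ell\frac{\partial N^i_j}{\partial x_\ell}+N^i_\ell N^\ell_j$. A fixed point $\bar x$ is Jacobi stable if all eigenvalues of the $2\times 2$ matrix $(P^i_j)$ evaluated at $(x,y)=(\bar x,0)$ have strictly negative real parts. *)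

theory Defs
  imports "HOL-Analysis.Derivative" "Jordan_Normal_Form.Char_Poly"
begin

(* States: x, y :: nat => real, only the coordinates 1 and 2 are used.
   A spray coefficient family G :: nat => (nat => real) => (nat => real) => real,
   G i x y = G^i(x,y), for i in {1,2}. *)

definition vec2 :: "real \<Rightarrow> real \<Rightarrow> nat \<Rightarrow> real" where
  "vec2 a b = (\<lambda>j. if j = 1 then a else if j = 2 then b else 0)"

definition pdx :: "((nat \<Rightarrow> real) \<Rightarrow> (nat \<Rightarrow> real) \<Rightarrow> real) \<Rightarrow> nat \<Rightarrow> (nat \<Rightarrow> real) \<Rightarrow> (nat \<Rightarrow> real) \<Rightarrow> real" where
  "pdx F j x y = deriv (\<lambda>t. F (x(j := t)) y) (x j)"

definition pdy :: "((nat \<Rightarrow> real) \<Rightarrow> (nat \<Rightarrow> real) \<Rightarrow> real) \<Rightarrow> nat \<Rightarrow> (nat \<Rightarrow> real) \<Rightarrow> (nat \<Rightarrow> real) \<Rightarrow> real" where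
  "pdy F j x y = deriv (\<lambda>t. F x (y(j := t))) (y j)"

type_synonym spray = "nat \<Rightarrow> (nat \<Rightarrow> real) \<Rightarrow> (nat \<Rightarrow> real) \<Rightarrow> real"

definition Ncoef :: "spray \<Rightarrow> nat \<Rightarrow> nat \<Rightarrow> (nat \<Rightarrow> real) \<Rightarrow> (nat \<Rightarrow> real) \<Rightarrow> real" where
  "Ncoef G i j = pdy (G i) j"

definition Gcoef :: "spray \<Rightarrow> nat \<Rightarrow> nat \<Rightarrow> nat \<Rightarrow> (nat \<Rightarrow> real) \<Rightarrow> (nat \<Rightarrow> real) \<Rightarrow> real" where
  "Gcoef G i j l = pdy (Ncoef G i j) l"

definition Pdev :: "spray \<Rightarrow> nat \<Rightarrow> nat \<Rightarrow> (nat \<Rightarrow> real) \<Rightarrow> (nat \<Rightarrow> real) \<Rightarrow> real" where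
  "Pdev G i j x y =
     - 2 * pdx (G i) j x y
     - 2 * (\<Sum>l\<in>{1..2}. G l x y * Gcoef G i j l x y)
     + (\<Sum>l\<in>{1..2}. y l * pdx (Ncoef G i j) l x y)
     + (\<Sum>l\<in>{1..2}. Ncoef G i l x y * Ncoef G l j x y)"

definition zero_vel :: "nat \<Rightarrow> real" where
  "zero_vel = (\<lambda>_. 0)"

definition Pmat :: "spray \<Rightarrow> (nat \<Rightarrow> real) \<Rightarrow> complex mat" where
  "Pmat G x = mat 2 2 (\<lambda>(i, j). complex_of_real (Pdev G (i + 1) (j + 1) x zero_vel))"

definition is_fixed_point :: "spray \<Rightarrow> real \<times> real \<Rightarrow> bool" where
  "is_fixed_point G p = (G 1 (vec2 (fst p) (snd p)) zero_vel = 0 \<and> G 2 (vec2 (fst p) (snd p)) zero_vel = 0)"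

definition jacobi_stable :: "spray \<Rightarrow> real \<times> real \<Rightarrow> bool" where
  "jacobi_stable G p = (\<forall>k. eigenvalue (Pmat G (vec2 (fst p) (snd p))) k \<longrightarrow> Re k < 0)"

definition jacobi_stable_fixed_points :: "spray \<Rightarrow> (real \<times> real) set" where
  "jacobi_stable_fixed_points G = {p. is_fixed_point G p \<and> jacobi_stable G p}"

definition airfoilG :: "real \<Rightarrow> real \<Rightarrow> spray" where
  "airfoilG M V i x y =
    (if i = 1 then
       (6*V^2*M^2*(x 2)^3 - 6000*M*(x 2)^3 + 30*V^2*x 2 + 30*V^2*y 1 + 19*V^2*y 2
        + 240*V*M*y 1 - 60*V*M*y 2 + 1200*M*x 1 - 300*M*x 2) / (2100*V^2*M)
     else if i = 2 then
       - (18*V^2*M^2*(x 2)^3 - 60000*M*(x 2)^3 + 90*V^2*x 2 + 90*V^2*y 1 + 85*V^2*y 2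
          + 300*V*M*y 1 - 600*V*M*y 2 + 1500*M*x 1 - 3000*M*x 2) / (5250*V^2*M)
     else 0)"

definition R1 :: "real \<Rightarrow> real \<Rightarrow> real" where
  "R1 M V = -9450*V^2*M - 43*V^2 + 135*V*M + 621900*M^2"

definition R2 :: "real \<Rightarrow> real \<Rightarrow> real" where
  "R2 M V = 1800*V^4*M + 1500*V^3*M^2 - 15660000*V^2*M^3 + 4*V^4 + 20*V^3*M
     - 123675*V^2*M^2 + 297000*V*M^3 + 769590000*M^4"

definition R3 :: "real \<Rightarrow> real \<Rightarrow> real" where
  "R3 M V = - (V^2) + 50*M"

definition R4 :: "real \<Rightarrow> real \<Rightarrow> real" where
  "R4 M V = V^2*M - 5000"

definition R5 :: "real \<Rightarrow> real \<Rightarrow> real" where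
  "R5 M V = -18900*V^4*M^2 + 43*V^4*M - 135*V^3*M^2 + 795600*V^2*M^3 + 47250000*V^2*M
     - 215000*V^2 + 675000*V*M - 1615500000*M^2"

definition R6 :: "real \<Rightarrow> real \<Rightarrow> real" where
  "R6 M V = 3600*V^6*M^2 + 3000*V^5*M^3 - 31320000*V^4*M^4 - 4*V^6*M - 20*V^5*M^2
     - 146325*V^4*M^3 - 522000*V^3*M^4 + 1579410000*V^2*M^5 - 4500000*V^4*M
     - 532500000*V^3*M^2 + 155250000000*V^2*M^3 + 20000*V^4 + 100000*V^3*M
     + 56625000*V^2*M^2 + 28485000000*V*M^3 - 7829550000000*M^4"

end

theory Submission
  imports Defs
begin


definition Nc :: "real \<Rightarrow> real \<Rightarrow> nat \<Rightarrow> nat \<Rightarrow> real" where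
  "Nc M V i j = (if i = 1 then (if j = 1 then (30*V^2+240*V*M)/(2100*V^2*M)
                                else if j = 2 then (19*V^2-60*V*M)/(2100*V^2*M) else 0)
                 else if i = 2 then (if j = 1 then -(90*V^2+300*V*M)/(5250*V^2*M)
                                else if j = 2 then -(85*V^2-600*V*M)/(5250*V^2*M) else 0)
                 else 0)"

definition Jc :: "real \<Rightarrow> real \<Rightarrow> real \<Rightarrow> nat \<Rightarrow> nat \<Rightarrow> real" where
  "Jc M V w i j = (if i = 1 then (if j = 1 then 1200*M/(2100*V^2*M)
                                else (3*(6*V^2*M^2-6000*M)* w + 30*V^2 - 300*M)/(2100*V^2*M))
                 else (if j = 1 then -(1500*M)/(5250*V^2*M)
                       else -(3*(18*V^2*M^2-60000*M)* w + 90*V^2 - 3000*M)/(5250*V^2*M)))"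

lemma Nc_deriv:
  assumes "M > 0" "V > 0"
  shows "((\<lambda>t. airfoilG M V i x (y(j:=t))) has_real_derivative Nc M V i j) (at t0)"
  using assms
  unfolding airfoilG_def Nc_def
  by (cases "i = 1"; cases "i = 2"; cases "j = 1"; cases "j = 2";
      auto intro!: derivative_eq_intros simp: field_simps)

lemma Ncoef_air:
  assumes "M > 0" "V > 0"
  shows "Ncoef (airfoilG M V) i j = (\<lambda>x y. Nc M V i j)"
  unfolding Ncoef_def pdy_def
  using Nc_deriv[OF assms] by (intro ext DERIV_imp_deriv) 

lemma deriv_const0: "deriv (\<lambda>t. c) z = (0::real)"
  by simp

lemma Gcoef_air:
  assumes "M > 0" "V > 0"
  shows "Gcoef (airfoilG M V) i j l x y = 0"
  unfolding Gcoef_def pdy_def Ncoef_air[OF assms] by simp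

lemma pdxN_air:
  assumes "M > 0" "V > 0"
  shows "pdx (Ncoef (airfoilG M V) i j) l x y = 0"
  unfolding pdx_def Ncoef_air[OF assms] by simp

lemma Jc_deriv:
  assumes "M > 0" "V > 0" "i \<in> {1,2}" "j \<in> {1,2}"
  shows "((\<lambda>t. airfoilG M V i ((vec2 p q)(j:=t)) zero_vel) has_real_derivative Jc M V (q^2) i j) (at ((vec2 p q) j))"
  using assms
  unfolding airfoilG_def Jc_def vec2_def zero_vel_def
  by (cases "i = 1"; cases "j = 1";
      auto intro!: derivative_eq_intros simp: field_simps power2_eq_square power3_eq_cube)

lemma pdx_air:
  assumes "M > 0" "V > 0" "i \<in> {1,2}" "j \<in> {1,2}"
  shows "pdx (airfoilG M V i) j (vec2 p q) zero_vel = Jc M V (q^2) i j"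
  unfolding pdx_def using Jc_deriv[OF assms] by (rule DERIV_imp_deriv)


definition Pr :: "real \<Rightarrow> real \<Rightarrow> real \<Rightarrow> nat \<Rightarrow> nat \<Rightarrow> real" where
  "Pr M V w i j = -2 * Jc M V w i j + Nc M V i 1 * Nc M V 1 j + Nc M V i 2 * Nc M V 2 j"

lemma Pdev_air:
  assumes "M > 0" "V > 0" "i \<in> {1,2}" "j \<in> {1,2}"
  shows "Pdev (airfoilG M V) i j (vec2 p q) zero_vel = Pr M V (q^2) i j"
  unfolding Pdev_def Pr_def pdx_air[OF assms] Gcoef_air[OF assms(1,2)] pdxN_air[OF assms(1,2)]
    Ncoef_air[OF assms(1,2)]
  by (simp add: zero_vel_def numeral_2_eq_2)

lemma det2:
  fixes A :: "'a::comm_ring_1 mat"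
  assumes A: "A \<in> carrier_mat 2 2"
  shows "det A = A$$(0,0)*A$$(1,1) - A$$(0,1)*A$$(1,0)"
proof -
  have "det A = (\<Sum>i<2. A $$ (i,0) * cofactor A i 0)" by (rule laplace_expansion_column[OF A]) simp
  also have "\<dots> = A$$(0,0) * cofactor A 0 0 + A$$(1,0) * cofactor A 1 0" by (simp add: numeral_2_eq_2)
  also have "cofactor A 0 0 = A$$(1,1)"
    unfolding cofactor_def using A by (subst det_single) (auto simp: mat_delete_def)
  also have "cofactor A 1 0 = - A$$(0,1)"
    unfolding cofactor_def using A by (subst det_single) (auto simp: mat_delete_def)
  finally show ?thesis by (simp add: algebra_simps)
qed

lemma eig2:
  fixes f :: "nat \<Rightarrow> nat \<Rightarrow> real"
  shows "eigenvalue (mat 2 2 (\<lambda>(i,j). complex_of_real (f i j))) k \<longleftrightarrow>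
         k^2 - of_real (f 0 0 + f 1 1) * k + of_real (f 0 0 * f 1 1 - f 0 1 * f 1 0) = 0"
proof -
  let ?A = "mat 2 2 (\<lambda>(i,j). complex_of_real (f i j))"
  have A: "?A \<in> carrier_mat 2 2" by simp
  have "eigenvalue ?A k \<longleftrightarrow> det (char_matrix ?A k) = 0" by (rule eigenvalue_det[OF A])
  also have "det (char_matrix ?A k) = (of_real (f 0 0) - k) * (of_real (f 1 1) - k) - of_real (f 0 1) * of_real (f 1 0)"
    by (subst det2) (auto simp: char_matrix_def)
  finally show ?thesis by (simp add: algebra_simps power2_eq_square)
qed

definition TR where "TR M V w = Pr M V w 1 1 + Pr M V w 2 2"
definition DT where "DT M V w = Pr M V w 1 1 * Pr M V w 2 2 - Pr M V w 1 2 * Pr M V w 2 1"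

lemma Pmat_air:
  assumes "M > 0" "V > 0"
  shows "Pmat (airfoilG M V) (vec2 p q) = mat 2 2 (\<lambda>(i,j). complex_of_real (Pr M V (q^2) (i+1) (j+1)))"
  unfolding Pmat_def
  by (rule eq_matI) (auto simp: Pdev_air[OF assms] less_2_cases_iff)

lemma quad_stable:
  fixes T D :: real
  shows "(\<forall>k::complex. k^2 - of_real T * k + of_real D = 0 \<longrightarrow> Re k < 0) \<longleftrightarrow> (T < 0 \<and> D > 0)"
proof
  assume H: "\<forall>k::complex. k^2 - of_real T * k + of_real D = 0 \<longrightarrow> Re k < 0"
  show "T < 0 \<and> D > 0"
  proof (rule ccontr)
    assume nd: "\<not> (T < 0 \<and> D > 0)"
    show False
    proof (cases "T^2 - 4*D \<ge> 0")
      case True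
      define r where "r = (T + sqrt (T^2 - 4*D))/2"
      have sq: "(sqrt (T^2 - 4*D))^2 = T^2 - 4*D" using True by simp
      have "r^2 - T*r + D = 0" unfolding r_def using sq by (simp add: field_simps power2_eq_square)
      hence "(complex_of_real r)^2 - of_real T * of_real r + of_real D = 0"
        by (metis (mono_tags, lifting) of_real_0 of_real_add of_real_diff of_real_mult of_real_power)
      with H have "r < 0" by fastforce
      moreover have "r \<ge> 0"
      proof (cases "T \<ge> 0")
        case True thus ?thesis unfolding r_def using True real_sqrt_ge_zero[OF \<open>T^2 - 4*D \<ge> 0\<close>] by simp
      next
        case False
        with nd have "D \<le> 0" by auto
        hence "T^2 - 4*D \<ge> T^2" by simp
        hence "sqrt (T^2 - 4*D) \<ge> sqrt (T^2)" by (rule real_sqrt_le_mono)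
        thus ?thesis unfolding r_def by simp
      qed
      ultimately show False by simp
    next
      case False
      define w where "w = sqrt (4*D - T^2)/2"
      have sq: "(sqrt (4*D - T^2))^2 = 4*D - T^2" using False by simp
      define k where "k = Complex (T/2) w"
      have "k^2 - of_real T * k + of_real D = 0"
        unfolding k_def w_def using sq
        by (simp add: complex_eq_iff power2_eq_square field_simps)
      with H have "T/2 < 0" unfolding k_def by fastforce
      moreover have "D > 0" using False by (smt (verit) zero_le_power2)
      ultimately show False using nd by simp
    qed
  qed
next
  assume TD: "T < 0 \<and> D > 0"
  show "\<forall>k::complex. k^2 - of_real T * k + of_real D = 0 \<longrightarrow> Re k < 0"
  proof (intro allI impI)
    fix k :: complex
    assume eq: "k^2 - of_real T * k + of_real D = 0"
    obtain x y where k: "k = Complex x y" by (cases k)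
    from eq have re: "x^2 - y^2 - T*x + D = 0" and im: "2*x*y - T*y = 0"
      unfolding k by (simp_all add: complex_eq_iff power2_eq_square)
    show "Re k < 0"
    proof (cases "y = 0")
      case True
      with re have "x^2 - T*x + D = 0" by simp
      have "x < 0"
      proof (rule ccontr)
        assume "\<not> x < 0" hence "x \<ge> 0" by simp
        hence "T*x \<le> 0" using TD by (simp add: mult_nonpos_nonneg)
        moreover have "x^2 \<ge> 0" by simp
        ultimately show False using \<open>x^2 - T*x + D = 0\<close> TD by linarith
      qed
      thus ?thesis using k by simp
    next
      case False
      with im have "2*x = T" by (metis mult.commute mult_cancel_left right_minus_eq mult.assoc)
      thus ?thesis using k TD by simp
    qed
  qed
qed


lemma stable_air:
  assumes "M > 0" "V > 0"
  shows "jacobi_stable (airfoilG M V) (p,q) \<longleftrightarrow> TR M V (q^2) < 0 \<and> DT M V (q^2) > 0"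
proof -
  have "jacobi_stable (airfoilG M V) (p,q) \<longleftrightarrow>
    (\<forall>k::complex. k^2 - of_real (TR M V (q^2)) * k + of_real (DT M V (q^2)) = 0 \<longrightarrow> Re k < 0)"
    unfolding jacobi_stable_def fst_conv snd_conv Pmat_air[OF assms] eig2 TR_def DT_def by (simp add: numeral_2_eq_2)
  also have "\<dots> \<longleftrightarrow> TR M V (q^2) < 0 \<and> DT M V (q^2) > 0" by (rule quad_stable)
  finally show ?thesis .
qed

lemma TR0: assumes "M > 0" "V > 0" shows "TR M V 0 = - R1 M V/(275625*V^2*M^2)"
  using assms unfolding TR_def Pr_def Jc_def Nc_def R1_def
  by (simp add: field_simps) (simp add: algebra_simps eval_nat_numeral)

lemma DT0: assumes "M > 0" "V > 0" shows "DT M V 0 = R2 M V/(689062500*V^4*M^4)"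
  using assms unfolding DT_def Pr_def Jc_def Nc_def R2_def
  apply (simp add: divide_simps)
  apply (simp add: algebra_simps eval_nat_numeral)
  done

lemma TRs: assumes "M > 0" "V > 0" "R4 M V \<noteq> 0"
  shows "TR M V (5*R3 M V/(M*R4 M V)) = R5 M V/(275625*V^2*M^2*R4 M V)"
  using assms unfolding TR_def Pr_def Jc_def Nc_def 
  apply (simp add: divide_simps R3_def R4_def R5_def)
  apply (simp add: algebra_simps eval_nat_numeral)
  done

lemma DTs: assumes "M > 0" "V > 0" "R4 M V \<noteq> 0"
  shows "DT M V (5*R3 M V/(M*R4 M V)) = - R6 M V/(689062500*V^4*M^4*R4 M V)"
  using assms unfolding DT_def Pr_def Jc_def Nc_def 
  apply (simp add: divide_simps R3_def R4_def R6_def)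
  apply (simp add: algebra_simps eval_nat_numeral)
  done



lemma certA:
  fixes M V :: real
  assumes M: "M > 0" and V: "V > 0"
    and "R1 M V > 0"
    and "R3 M V < 0"
  shows "R2 M V < 0"
proof -
  define s0 where "s0 = 1610200478250*V^4 + 2682750660535*V^5 + 1336959053946*V^6 + 335396005902000*M^2*V^3 + 44786381675490000*M^3*V^3 + 18231352867948500*M^3*V^4 + 187142181831360000*M^4*V^3 + 94887199726200000*M^5*V^2"
  define s1 where "s1 = 70357470750*V^2 + 135920335720*V^3 + 67389084000*V^4 + 190935738000*M*V^3 + 25242697116000*M^2*V^2"
  define s2 where "s2 = 331482247425*V^3 + 145600794054*V^4 + 2101528584540000*M^2*V + 555100732179000*M^2*V^2 + 5445506341333800000*M^3 + 10895215739836680000*M^3*V + 5759007471021451500*M^3*V^2 + 10891012682667600000*M^4 + 10893114211252140000*M^4*V + 5445506341333800000*M^5"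
  have ps0: "s0 > 0" unfolding s0_def using M V by (intro add_pos_pos mult_pos_pos zero_less_power; simp)
  have ps1: "s1 > 0" unfolding s1_def using M V by (intro add_pos_pos mult_pos_pos zero_less_power; simp)
  have ps2: "s2 > 0" unfolding s2_def using M V by (intro add_pos_pos mult_pos_pos zero_less_power; simp)
  have eq: "353792691000 * ((1+M+V)^2) * (- R2 M V) = s0 * (1) + s1 * (R1 M V) + s2 * (- R3 M V)"
    unfolding s0_def s1_def s2_def R1_def R2_def R3_def
    by (simp add: algebra_simps eval_nat_numeral)
  have "0 < s0 * (1) + s1 * (R1 M V) + s2 * (- R3 M V)"
    by (intro add_pos_pos mult_pos_pos) (simp_all add: ps0 ps1 ps2 assms)
  hence "0 < 353792691000 * ((1+M+V)^2) * (- R2 M V)" using eq by simp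
  moreover have "0 < 353792691000 * ((1+M+V)^2::real)" using M V by simp
  ultimately have "0 < - R2 M V" by (rule zero_less_mult_pos)
  thus ?thesis by simp
qed

lemma certC:
  fixes M V :: real
  assumes M: "M > 0" and V: "V > 0"
    and "R3 M V > 0"
    and "R4 M V > 0"
  shows "R6 M V > 0"
proof -
  have h3: "V^2 < 50*M" using assms(3) unfolding R3_def by simp
  have h4: "V^2*M > 5000" using assms(4) unfolding R4_def by simp
  have "V^2*M < 50*M*M" using h3 M by simp
  hence "M*M > 100" using h4 by simp
  have g: "M - 10 > 0"
  proof (rule ccontr)
    assume "\<not> M - 10 > 0" hence "M \<le> 10" by simp
    hence "M*M \<le> 10*10" using M by (intro mult_mono) auto
    thus False using \<open>M*M > 100\<close> by simp
  qed
  hence g': "10 < M" by simp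
  define s0 where "s0 = 47265000000000*V + 268170000000*V^2 + 521817000000*M*V^2 + 12*M*V^7 + 52011825000*M^2*V^2 + 1380315*M^3*V^4"
  define s1 where "s1 = 4726500000000*V + 13083550000*V^3 + 6000*V^5 + 472650000000*M*V + 2616740000*M*V^3 + 9413400*M*V^4 + 1433890*M*V^5 + 47265000000*M^2*V + 249780000*M^2*V^3 + 286712*M^2*V^5"
  define s2 where "s2 = 261671000*V^3 + 107988*M*V^5 + 350260400*M^4*V + 335379675*M^5"
  define s3 where "s3 = 12*V^4 + 26544000*M^3*V + 66920325*M^4"
  define s4 where "s4 = 107268*V^2 + 198000*M*V^2"
  define s5 where "s5 = 13941732000*M^2*V^2 + 8100000*M^4*V^2 + 11015940*M^4*V^3 + 8100000*M^5*V^2"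
  define s6 where "s6 = 952930065*M^3 + 928780772*M^3*V + 931500000*M^4"
  have ps0: "s0 > 0" unfolding s0_def using M V by (intro add_pos_pos mult_pos_pos zero_less_power; simp)
  have ps1: "s1 > 0" unfolding s1_def using M V by (intro add_pos_pos mult_pos_pos zero_less_power; simp)
  have ps2: "s2 > 0" unfolding s2_def using M V by (intro add_pos_pos mult_pos_pos zero_less_power; simp)
  have ps3: "s3 > 0" unfolding s3_def using M V by (intro add_pos_pos mult_pos_pos zero_less_power; simp)
  have ps4: "s4 > 0" unfolding s4_def using M V by (intro add_pos_pos mult_pos_pos zero_less_power; simp)
  have ps5: "s5 > 0" unfolding s5_def using M V by (intro add_pos_pos mult_pos_pos zero_less_power; simp)
  have ps6: "s6 > 0" unfolding s6_def using M V by (intro add_pos_pos mult_pos_pos zero_less_power; simp)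
  have eq: "30 * (1+M+V) * (R6 M V) = s0 * ((M - 10)) + s1 * ((M - 10) * (M - 10)) + s2 * (R4 M V) + s3 * (R4 M V * (M - 10)) + s4 * (R4 M V * R4 M V) + s5 * (R3 M V) + s6 * (R3 M V * R4 M V)"
    unfolding s0_def s1_def s2_def s3_def s4_def s5_def s6_def R3_def R4_def R6_def
    by (simp add: algebra_simps eval_nat_numeral)
  have "0 < s0 * ((M - 10)) + s1 * ((M - 10) * (M - 10)) + s2 * (R4 M V) + s3 * (R4 M V * (M - 10)) + s4 * (R4 M V * R4 M V) + s5 * (R3 M V) + s6 * (R3 M V * R4 M V)"
    by (intro add_pos_pos mult_pos_pos) (simp_all add: ps0 ps1 ps2 ps3 ps4 ps5 ps6 assms g g')
  hence "0 < 30 * (1+M+V) * (R6 M V)" using eq by simp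
  moreover have "0 < 30 * (1+M+V::real)" using M V by simp
  ultimately show "0 < R6 M V" by (rule zero_less_mult_pos)
qed

definition X1 :: "real \<Rightarrow> real \<Rightarrow> real \<Rightarrow> real" where
  "X1 M V q = -((6*V^2*M^2-6000*M)*q^3 + 30*V^2*q - 300*M*q)/(1200*M)"

lemma fixed_air:
  assumes M: "M > 0" and V: "V > 0"
  shows "is_fixed_point (airfoilG M V) (p,q) \<longleftrightarrow> p = X1 M V q \<and> q * (21*M*R4 M V*q^2 - 105*R3 M V) = 0"
proof -
  define n1 where "n1 = (6*V^2*M^2-6000*M)*q^3 + 30*V^2*q + 1200*M*p - 300*M*q"
  define n2 where "n2 = (18*V^2*M^2-60000*M)*q^3 + 90*V^2*q + 1500*M*p - 3000*M*q"
  have "airfoilG M V 1 (vec2 p q) zero_vel = n1 / (2100*V^2*M)"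
    unfolding airfoilG_def vec2_def zero_vel_def n1_def by (simp add: algebra_simps)
  moreover have "airfoilG M V 2 (vec2 p q) zero_vel = - n2 / (5250*V^2*M)"
    unfolding airfoilG_def vec2_def zero_vel_def n2_def by (simp add: algebra_simps)
  ultimately have fp: "is_fixed_point (airfoilG M V) (p,q) \<longleftrightarrow> n1 = 0 \<and> n2 = 0"
    unfolding is_fixed_point_def using M V by simp
  have e2: "n2 = 5/4 * n1 + 1/2 * (q * (21*M*R4 M V*q^2 - 105*R3 M V))"
    unfolding R3_def R4_def n1_def n2_def by (simp add: algebra_simps eval_nat_numeral)
  have e1: "n1 = 0 \<longleftrightarrow> p = X1 M V q" unfolding X1_def n1_def using M by (auto simp: field_simps)
  show ?thesis using e1 e2 fp by auto
qed

lemma cardQ_gen: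
  fixes s :: real and st :: "real \<Rightarrow> bool"
  assumes "s \<noteq> 0"
  shows "card {q. (q = 0 \<or> q^2 = s) \<and> st (q^2)} = (if st 0 then 1 else 0) + (if s > 0 \<and> st s then 2 else 0)"
proof -
  have sq: "q^2 = s \<longleftrightarrow> s > 0 \<and> (q = sqrt s \<or> q = - sqrt s)" for q
  proof
    assume h: "q^2 = s"
    hence "s > 0" using assms by auto
    moreover have "sqrt s = \<bar>q\<bar>" using h by auto
    ultimately show "s > 0 \<and> (q = sqrt s \<or> q = - sqrt s)" by auto
  next
    assume "s > 0 \<and> (q = sqrt s \<or> q = - sqrt s)"
    thus "q^2 = s" by auto
  qed
  have "{q. (q = 0 \<or> q^2 = s) \<and> st (q^2)} = (if st 0 then {0} else {}) \<union> (if s > 0 \<and> st s then {sqrt s, - sqrt s} else {})"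
    using assms by (auto simp: sq)
  moreover have "s > 0 \<Longrightarrow> sqrt s \<noteq> - sqrt s" by simp
  ultimately show ?thesis by auto
qed


lemma logic:
  fixes r1 r2 r3 r4 r5 r6 :: real and n :: nat
  assumes nz: "r1 \<noteq> 0" "r2 \<noteq> 0" "r3 \<noteq> 0" "r4 \<noteq> 0" "r5 \<noteq> 0" "r6 \<noteq> 0"
    and A: "r1 > 0 \<Longrightarrow> r3 < 0 \<Longrightarrow> r2 < 0"
    and C: "r3 > 0 \<Longrightarrow> r4 > 0 \<Longrightarrow> r6 > 0"
    and n: "n = (if r1 > 0 \<and> r2 > 0 then 1 else 0) +
      (if ((r3 > 0 \<and> r4 > 0) \<or> (r3 < 0 \<and> r4 < 0)) \<and> ((r5 > 0 \<and> r4 < 0) \<or> (r5 < 0 \<and> r4 > 0))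
          \<and> ((r6 > 0 \<and> r4 < 0) \<or> (r6 < 0 \<and> r4 > 0)) then 2 else 0)"
  shows "(n = 1 \<longleftrightarrow>
            (r1 > 0 \<and> r2 > 0 \<and> r4 > 0 \<and> r5 > 0 \<and> r6 > 0)
          \<or> (r1 > 0 \<and> r2 > 0 \<and> r3 > 0 \<and> r4 < 0)
          \<or> (r1 > 0 \<and> r2 > 0 \<and> r3 > 0 \<and> r4 > 0 \<and> r5 < 0 \<and> r6 > 0))
       \<and> (n = 2 \<longleftrightarrow>
            (r1 < 0 \<and> r3 < 0 \<and> r4 < 0 \<and> r5 > 0 \<and> r6 > 0)
          \<or> (r1 > 0 \<and> r2 < 0 \<and> r3 < 0 \<and> r4 < 0 \<and> r5 > 0 \<and> r6 > 0))"
proof -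
  have s: "r1 < 0 \<longleftrightarrow> \<not> r1 > 0" "r2 < 0 \<longleftrightarrow> \<not> r2 > 0" "r3 < 0 \<longleftrightarrow> \<not> r3 > 0"
    "r4 < 0 \<longleftrightarrow> \<not> r4 > 0" "r5 < 0 \<longleftrightarrow> \<not> r5 > 0" "r6 < 0 \<longleftrightarrow> \<not> r6 > 0"
    using nz by linarith+
  have A': "r1 > 0 \<Longrightarrow> \<not> r3 > 0 \<Longrightarrow> \<not> r2 > 0" using A s by blast
  have C': "r3 > 0 \<Longrightarrow> r4 > 0 \<Longrightarrow> r6 > 0" by (rule C)
  show ?thesis unfolding n s using A' C' by auto
qed

lemma hdiv1:
  fixes aa cc :: real
  assumes c: "cc > 0" shows "(aa / cc < 0) = (aa < 0)"
proof
  assume h: "aa / cc < 0"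
  show "aa < 0"
  proof (rule ccontr)
    assume "\<not> aa < 0" hence "aa \<ge> 0" by simp
    hence "aa / cc \<ge> 0" using c by simp
    thus False using h by simp
  qed
next
  assume "aa < 0" thus "aa / cc < 0" using c by (rule divide_neg_pos)
qed

lemma hdiv2: "(cc::real) > 0 \<Longrightarrow> (0 < - aa / cc) = (aa < 0)"
  using hdiv1[of cc aa] by simp

theorem theorem4p2:
  fixes M V :: real
  assumes "M > 0" and "V > 0"
    and "(M - 10) * R1 M V * R2 M V * R3 M V * R4 M V * R5 M V * R6 M V \<noteq> 0"
  shows "(card (jacobi_stable_fixed_points (airfoilG M V)) = 1 \<longleftrightarrow>
            (R1 M V > 0 \<and> R2 M V > 0 \<and> R4 M V > 0 \<and> R5 M V > 0 \<and> R6 M V > 0)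
          \<or> (R1 M V > 0 \<and> R2 M V > 0 \<and> R3 M V > 0 \<and> R4 M V < 0)
          \<or> (R1 M V > 0 \<and> R2 M V > 0 \<and> R3 M V > 0 \<and> R4 M V > 0 \<and> R5 M V < 0 \<and> R6 M V > 0))
       \<and> (card (jacobi_stable_fixed_points (airfoilG M V)) = 2 \<longleftrightarrow>
            (R1 M V < 0 \<and> R3 M V < 0 \<and> R4 M V < 0 \<and> R5 M V > 0 \<and> R6 M V > 0)
          \<or> (R1 M V > 0 \<and> R2 M V < 0 \<and> R3 M V < 0 \<and> R4 M V < 0 \<and> R5 M V > 0 \<and> R6 M V > 0))"
proof -
  note M = assms(1) and V = assms(2)
  have nz: "R1 M V \<noteq> 0" "R2 M V \<noteq> 0" "R3 M V \<noteq> 0" "R4 M V \<noteq> 0" "R5 M V \<noteq> 0" "R6 M V \<noteq> 0"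
    using assms(3) by auto
  define s where "s = 5 * R3 M V / (M * R4 M V)"
  define st where "st w = (TR M V w < 0 \<and> DT M V w > 0)" for w
  have qs: "q * (21*M*R4 M V*q^2 - 105*R3 M V) = 0 \<longleftrightarrow> q = 0 \<or> q^2 = s" for q
  proof -
    have "21*M*R4 M V*q^2 - 105*R3 M V = 0 \<longleftrightarrow> q^2 * (M * R4 M V) = 5 * R3 M V" by (auto simp: algebra_simps)
    also have "\<dots> \<longleftrightarrow> q^2 = s" unfolding s_def using M nz(4) by (auto simp: field_simps)
    finally have e: "(21*M*R4 M V*q^2 - 105*R3 M V = 0) = (q^2 = s)" .
    show ?thesis by (simp only: mult_eq_0_iff e)
  qed
  have fx: "is_fixed_point (airfoilG M V) (p,q) \<longleftrightarrow> p = X1 M V q \<and> (q = 0 \<or> q^2 = s)" for p q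
    by (simp only: fixed_air[OF M V] qs)
  have set: "jacobi_stable_fixed_points (airfoilG M V) = (\<lambda>q. (X1 M V q, q)) ` {q. (q = 0 \<or> q^2 = s) \<and> st (q^2)}"
    unfolding jacobi_stable_fixed_points_def st_def
    by (auto simp: fx stable_air[OF M V] image_iff)
  have inj: "inj_on (\<lambda>q. (X1 M V q, q)) X" for X by (auto simp: inj_on_def)
  have snz: "s \<noteq> 0" unfolding s_def using M nz by simp
  have card: "card (jacobi_stable_fixed_points (airfoilG M V)) = (if st 0 then 1 else 0) + (if s > 0 \<and> st s then 2 else 0)"
    unfolding set card_image[OF inj] using cardQ_gen[OF snz, of st] by simp
  have c1: "275625*V^2*M^2 > 0" and c2: "689062500*V^4*M^4 > 0" using M V by simp_all
  have st0: "st 0 \<longleftrightarrow> R1 M V > 0 \<and> R2 M V > 0"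
    unfolding st_def TR0[OF M V] DT0[OF M V] using c1 c2
    by (simp add: divide_less_0_iff zero_less_divide_iff)
  have "TR M V s = (R5 M V / R4 M V) / (275625*V^2*M^2)" unfolding s_def TRs[OF M V nz(4)] by simp
  moreover have "DT M V s = - (R6 M V / R4 M V) / (689062500*V^4*M^4)" unfolding s_def DTs[OF M V nz(4)] by simp
  ultimately have sts: "st s \<longleftrightarrow> R5 M V / R4 M V < 0 \<and> R6 M V / R4 M V < 0"
    unfolding st_def by (simp only: hdiv1[OF c1] hdiv2[OF c2])
  have sts': "st s \<longleftrightarrow> ((R5 M V > 0 \<and> R4 M V < 0) \<or> (R5 M V < 0 \<and> R4 M V > 0))
          \<and> ((R6 M V > 0 \<and> R4 M V < 0) \<or> (R6 M V < 0 \<and> R4 M V > 0))"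
    unfolding sts by (simp add: divide_less_0_iff)
  have spos: "s > 0 \<longleftrightarrow> (R3 M V > 0 \<and> R4 M V > 0) \<or> (R3 M V < 0 \<and> R4 M V < 0)"
    unfolding s_def using M by (simp add: zero_less_divide_iff zero_less_mult_iff mult_less_0_iff)
  show ?thesis
  proof (rule logic[OF nz])
    show "R1 M V > 0 \<Longrightarrow> R3 M V < 0 \<Longrightarrow> R2 M V < 0" using certA[OF M V] by blast
    show "R3 M V > 0 \<Longrightarrow> R4 M V > 0 \<Longrightarrow> R6 M V > 0" using certC[OF M V] by blast
    show "card (jacobi_stable_fixed_points (airfoilG M V)) =
      (if R1 M V > 0 \<and> R2 M V > 0 then 1 else 0) +
      (if ((R3 M V > 0 \<and> R4 M V > 0) \<or> (R3 M V < 0 \<and> R4 M V < 0)) \<and> ((R5 M V > 0 \<and> R4 M V < 0) \<or> (R5 M V < 0 \<and> R4 M V > 0))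
          \<and> ((R6 M V > 0 \<and> R4 M V < 0) \<or> (R6 M V < 0 \<and> R4 M V > 0)) then 2 else 0)"
      unfolding card st0 sts' spos by simp
  qed
qed

end
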